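(* Let $g\in\mathcal D$, let $Y_1,Y_2$ be i.i.d. with density $g$, let $k\in\mathbb N$ and define $h:[0,1)^2\to\mathbb R$ by $$h(y_1,y_2):=\sum_{j\in\mathbb Z:|j|\in[k]}(e_j(-y_1)-g_j)(e_j(y_2)-\overline{g_j}).$$ Then $h$ is real-valued, bounded, symmetric and satisfies $\mathbb E[h(Y_1,y_2)]=0$ for all $y_2\in[0,1)$. Moreover, with $\mathsf A:=8k$, $\mathsf B:=3\|g_\bullet\|_{\ell^2}(2k)^{3/4}$, $\mathsf C:=2\|g_\bullet\|_{\ell^2}(2k)^{1/2}$ and $\mathsf D:=\mathsf C$, one has $\sup_{y_1,y_2}|h(y_1,y_2)|\le\mathsf A$, $\sup_{y_2}\mathbb E h^2(Y_1,y_2)\le\mathsf B^2$, $\mathbb E h^2(Y_1,Y_2)\le\mathsf C^2$ and $\sup\{\mathbb E[h(Y_1,Y_2)\zeta(Y_1)\xi(Y_2)]:\mathbb E\zeta^2(Y_1)\le1,\mathbb E\xi^2(Y_2)\le1\}\le\mathsf D$. If in addition $L^2(g)=L^2_{\mathbb R}$, then the last inequality also holds with $\mathsf D:=4\|g_\bullet\|_{\ell^1}$.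
   Context: $L^2:=L^2([0,1))$ complex-valued square-integrable functions with $\langle h_1,h_2\rangle=\int_0^1h_1\overline{h_2}$. $e_j(x):=\exp(-\mathrm i2\pi jx)$, $h_j:=\langle h,e_j\rangle$ for $j\in\mathbb Z$; $\|h_\bullet\|_{\ell^p}:=(\sum_{j\in\mathbb Z}|h_j|^p)^{1/p}$. $\mathcal D$ is the set of real-valued probability densities on $[0,1)$ in $L^2$. $[k]:=\{1,\dots,k\}$. For a density $g$, $L^2(g)$ is the set of real-valued Borel functions $u$ on $[0,1)$ with $\int_0^1u^2g<\infty$, and $L^2_{\mathbb R}:=L^2(\mathbb 1_{[0,1)})$. The suprema over $\zeta,\xi$ range over real Borel functions. *)

theory Defs
  imports "HOL-Analysis.Analysis"
begin

definition ej :: "int \<Rightarrow> real \<Rightarrow> complex" where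
  "ej j x = exp (- \<i> * complex_of_real (2 * pi * real_of_int j * x))"

definition fcoef :: "(real \<Rightarrow> real) \<Rightarrow> int \<Rightarrow> complex" where
  "fcoef g j = (LINT x:{0..<1}|lborel. complex_of_real (g x) * cnj (ej j x))"

definition dens_D :: "(real \<Rightarrow> real) \<Rightarrow> bool" where
  "dens_D g \<longleftrightarrow> g \<in> borel_measurable borel \<and> (\<forall>x\<in>{0..<1}. 0 \<le> g x)
     \<and> set_integrable lborel {0..<1} g \<and> (LINT x:{0..<1}|lborel. g x) = 1
     \<and> set_integrable lborel {0..<1} (\<lambda>x. (g x)\<^sup>2)"

definition L2w :: "(real \<Rightarrow> real) \<Rightarrow> (real \<Rightarrow> real) set" where
  "L2w g = {u. u \<in> borel_measurable borel \<and>
      (\<integral>\<^sup>+ x. ennreal ((u x)\<^sup>2 * g x) * indicator {0..<1} x \<partial>lborel) < \<infinity>}"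

definition hker :: "(real \<Rightarrow> real) \<Rightarrow> nat \<Rightarrow> real \<Rightarrow> real \<Rightarrow> complex" where
  "hker g k y1 y2 = (\<Sum>j\<in>{j::int. 1 \<le> \<bar>j\<bar> \<and> \<bar>j\<bar> \<le> int k}.
      (ej j (- y1) - fcoef g j) * (ej j y2 - cnj (fcoef g j)))"

definition l2norm_fc :: "(real \<Rightarrow> real) \<Rightarrow> real" where
  "l2norm_fc g = sqrt (\<Sum>\<^sub>\<infinity>j\<in>(UNIV::int set). (cmod (fcoef g j))\<^sup>2)"

definition l1norm_fc :: "(real \<Rightarrow> real) \<Rightarrow> real" where
  "l1norm_fc g = (\<Sum>\<^sub>\<infinity>j\<in>(UNIV::int set). cmod (fcoef g j))"

end

theory Submission
  imports Defs
begin


lemma quad_trick: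
  fixes S U R :: real
  assumes S: "S \<ge> 0" and U: "U \<ge> 0" and R: "R \<ge> 0"
    and H: "\<And>t. t > 0 \<Longrightarrow> 2 * S \<le> t * U + R / t"
  shows "S\<^sup>2 \<le> U * R"
proof (cases "S = 0")
  case True then show ?thesis using U R by simp
next
  case False
  then have Sp: "S > 0" using S by simp
  show ?thesis
  proof (cases "U = 0")
    case True
    have "2 * S \<le> (R+1)/S * U + R / ((R+1)/S)" using H[of "(R+1)/S"] Sp R by simp
    also have "\<dots> = R * S / (R+1)" using True by simp
    also have "\<dots> < S" using Sp R by (simp add: field_simps)
    finally show ?thesis using Sp by simp
  next
    case False
    then have Up: "U > 0" using U by simp
    have "2 * S \<le> S / U * U + R / (S / U)" using H[of "S/U"] Sp Up by simp
    also have "\<dots> = S + R * U / S" using Up Sp by (simp add: field_simps)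
    finally have "S \<le> R * U / S" by simp
    then have "S * S \<le> R * U" using Sp by (simp add: field_simps)
    then show ?thesis by (simp add: power2_eq_square mult.commute)
  qed
qed

lemma bessel_gen:
  fixes M :: "'a measure" and u w :: "'a \<Rightarrow> real" and \<phi> :: "'b \<Rightarrow> 'a \<Rightarrow> complex"
  assumes F: "finite F"
    and w: "\<And>x. 0 \<le> w x"
    and iu: "integrable M (\<lambda>x. w x * (u x)\<^sup>2)"
    and ia: "\<And>j. j \<in> F \<Longrightarrow> integrable M (\<lambda>x. complex_of_real (w x * u x) * \<phi> j x)"
    and iG: "\<And>j l. j \<in> F \<Longrightarrow> l \<in> F \<Longrightarrow> integrable M (\<lambda>x. complex_of_real (w x) * (\<phi> j x * cnj (\<phi> l x)))"
  defines "a \<equiv> \<lambda>j. integral\<^sup>L M (\<lambda>x. complex_of_real (w x * u x) * \<phi> j x)"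
    and "G \<equiv> \<lambda>j l. integral\<^sup>L M (\<lambda>x. complex_of_real (w x) * (\<phi> j x * cnj (\<phi> l x)))"
  shows "(\<Sum>j\<in>F. (cmod (a j))\<^sup>2)\<^sup>2 \<le> (integral\<^sup>L M (\<lambda>x. w x * (u x)\<^sup>2)) *
            (\<Sum>j\<in>F. \<Sum>l\<in>F. cmod (a j) * cmod (a l) * cmod (G j l))"
proof -
  define q where "q = (\<lambda>x. \<Sum>j\<in>F. cnj (a j) * \<phi> j x)"
  define S where "S = (\<Sum>j\<in>F. (cmod (a j))\<^sup>2)"
  define U where "U = integral\<^sup>L M (\<lambda>x. w x * (u x)\<^sup>2)"
  define R where "R = (\<Sum>j\<in>F. \<Sum>l\<in>F. cmod (a j) * cmod (a l) * cmod (G j l))"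
  have ia': "\<And>j. j \<in> F \<Longrightarrow> integrable M (\<lambda>x. complex_of_real (w x) * complex_of_real (u x) * \<phi> j x)"
    using ia by simp
  have r1: "\<And>x. complex_of_real (w x * u x) * q x = (\<Sum>j\<in>F. cnj (a j) * (complex_of_real (w x * u x) * \<phi> j x))"
    unfolding q_def sum_distrib_left by (simp add: mult_ac)
  have i1: "integrable M (\<lambda>x. complex_of_real (w x * u x) * q x)"
    unfolding r1 by (intro Bochner_Integration.integrable_sum integrable_mult_right ia)
  have e1: "integral\<^sup>L M (\<lambda>x. complex_of_real (w x * u x) * q x) = complex_of_real S"
  proof -
    have "integral\<^sup>L M (\<lambda>x. complex_of_real (w x * u x) * q x)
        = (\<Sum>j\<in>F. cnj (a j) * a j)"
      unfolding r1 by (subst Bochner_Integration.integral_sum) (auto simp: ia ia' a_def intro!: integrable_mult_right)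
    also have "\<dots> = complex_of_real S"
      unfolding S_def of_real_sum complex_norm_square by (simp add: mult.commute)
    finally show ?thesis .
  qed
  have qq: "\<And>x. q x * cnj (q x) = (\<Sum>j\<in>F. \<Sum>l\<in>F. cnj (a j) * a l * (\<phi> j x * cnj (\<phi> l x)))"
    unfolding q_def by (simp add: sum_distrib_left sum_distrib_right mult_ac)
  have r2: "\<And>x. complex_of_real (w x) * (q x * cnj (q x)) = (\<Sum>j\<in>F. \<Sum>l\<in>F. (cnj (a j) * a l) * (complex_of_real (w x) * (\<phi> j x * cnj (\<phi> l x))))"
    unfolding qq sum_distrib_left by (simp add: mult_ac)
  have i2: "integrable M (\<lambda>x. complex_of_real (w x) * (q x * cnj (q x)))"
    unfolding r2 by (intro Bochner_Integration.integrable_sum integrable_mult_right iG)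
  have e2: "integral\<^sup>L M (\<lambda>x. complex_of_real (w x) * (q x * cnj (q x)))
      = (\<Sum>j\<in>F. \<Sum>l\<in>F. cnj (a j) * a l * G j l)"
  proof -
    have "integral\<^sup>L M (\<lambda>x. complex_of_real (w x) * (q x * cnj (q x)))
       = (\<Sum>j\<in>F. integral\<^sup>L M (\<lambda>x. \<Sum>l\<in>F. (cnj (a j) * a l) * (complex_of_real (w x) * (\<phi> j x * cnj (\<phi> l x)))))"
      unfolding r2 by (rule Bochner_Integration.integral_sum) (intro Bochner_Integration.integrable_sum integrable_mult_right iG, auto)
    also have "\<dots> = (\<Sum>j\<in>F. \<Sum>l\<in>F. integral\<^sup>L M (\<lambda>x. (cnj (a j) * a l) * (complex_of_real (w x) * (\<phi> j x * cnj (\<phi> l x)))))"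
      by (intro sum.cong refl Bochner_Integration.integral_sum) (intro integrable_mult_right iG, auto)
    also have "\<dots> = (\<Sum>j\<in>F. \<Sum>l\<in>F. cnj (a j) * a l * G j l)"
      unfolding G_def by (intro sum.cong refl integral_mult_right_zero)
    finally show ?thesis .
  qed
  have Rb: "Re (\<Sum>j\<in>F. \<Sum>l\<in>F. cnj (a j) * a l * G j l) \<le> R"
  proof -
    have "Re (\<Sum>j\<in>F. \<Sum>l\<in>F. cnj (a j) * a l * G j l) \<le> cmod (\<Sum>j\<in>F. \<Sum>l\<in>F. cnj (a j) * a l * G j l)"
      by (rule complex_Re_le_cmod)
    also have "\<dots> \<le> (\<Sum>j\<in>F. cmod (\<Sum>l\<in>F. cnj (a j) * a l * G j l))" by (rule norm_sum)
    also have "\<dots> \<le> R" unfolding R_def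
      by (intro sum_mono order.trans[OF norm_sum]) (simp add: norm_mult)
    finally show ?thesis .
  qed
  have H: "2 * S \<le> t * U + R / t" if t: "t > 0" for t
  proof -
    have pw: "2 * Re (complex_of_real (w x * u x) * q x)
        \<le> t * (w x * (u x)\<^sup>2) + Re (complex_of_real (w x) * (q x * cnj (q x))) / t" for x
    proof -
      have "Re (q x * cnj (q x)) = (cmod (q x))\<^sup>2" by (simp add: cmod_power2 flip: power2_eq_square)
      moreover have "(Re (q x))\<^sup>2 \<le> (cmod (q x))\<^sup>2" using abs_Re_le_cmod[of "q x"] by (metis abs_ge_zero power2_abs power_mono)
      moreover have "0 \<le> (t * u x - Re (q x))\<^sup>2" by simp
      ultimately have "2 * t * (u x * Re (q x)) \<le> t\<^sup>2 * (u x)\<^sup>2 + Re (q x * cnj (q x))"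
        by (simp add: power2_eq_square algebra_simps)
      then have "2 * (u x * Re (q x)) \<le> t * (u x)\<^sup>2 + Re (q x * cnj (q x)) / t"
        using t by (simp add: field_simps power2_eq_square)
      then have "w x * (2 * (u x * Re (q x))) \<le> w x * (t * (u x)\<^sup>2 + Re (q x * cnj (q x)) / t)"
        using w by (rule mult_left_mono) 
      then show ?thesis by (simp add: algebra_simps)
    qed
    have "2 * S = integral\<^sup>L M (\<lambda>x. 2 * Re (complex_of_real (w x * u x) * q x))"
    proof -
      have s1: "S = integral\<^sup>L M (\<lambda>x. Re (complex_of_real (w x * u x) * q x))"
        using e1 integral_Re[OF i1] by (metis Re_complex_of_real)
      show ?thesis unfolding s1 by (rule integral_mult_right_zero[symmetric])
    qed
    also have "\<dots> \<le> integral\<^sup>L M (\<lambda>x. t * (w x * (u x)\<^sup>2) + Re (complex_of_real (w x) * (q x * cnj (q x))) / t)"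
    proof (rule integral_mono[OF _ _ pw])
      show "integrable M (\<lambda>x. 2 * Re (complex_of_real (w x * u x) * q x))"
        using integrable_Re[OF i1] by (rule integrable_mult_right)
      show "integrable M (\<lambda>x. t * (w x * (u x)\<^sup>2) + Re (complex_of_real (w x) * (q x * cnj (q x))) / t)"
        by (intro Bochner_Integration.integrable_add integrable_mult_right iu integrable_divide_zero integrable_Re i2)
    qed
    also have "\<dots> = t * U + Re (\<Sum>j\<in>F. \<Sum>l\<in>F. cnj (a j) * a l * G j l) / t"
    proof -
      have "integral\<^sup>L M (\<lambda>x. t * (w x * (u x)\<^sup>2) + Re (complex_of_real (w x) * (q x * cnj (q x))) / t)
         = integral\<^sup>L M (\<lambda>x. t * (w x * (u x)\<^sup>2)) + integral\<^sup>L M (\<lambda>x. Re (complex_of_real (w x) * (q x * cnj (q x))) / t)"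
        by (intro Bochner_Integration.integral_add integrable_mult_right iu integrable_divide_zero integrable_Re i2)
      also have "\<dots> = t * U + Re (integral\<^sup>L M (\<lambda>x. complex_of_real (w x) * (q x * cnj (q x)))) / t"
        unfolding U_def integral_mult_right_zero integral_divide_zero integral_Re[OF i2] ..
      finally show ?thesis unfolding e2 .
    qed
    also have "\<dots> \<le> t * U + R / t" using Rb t by (simp add: divide_right_mono)
    finally show ?thesis .
  qed
  have "S\<^sup>2 \<le> U * R"
    by (rule quad_trick[OF _ _ _ H]) (auto simp: S_def U_def R_def w intro!: sum_nonneg integral_nonneg)
  then show ?thesis by (simp add: S_def U_def R_def)
qed



lemma prod_sep:
  fixes f k :: "real \<Rightarrow> complex"
  assumes f: "integrable lborel f" and k: "integrable lborel k"
  shows "integrable (lborel \<Otimes>\<^sub>M lborel) (\<lambda>z. f (fst z) * k (snd z))"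
    and "integral\<^sup>L (lborel \<Otimes>\<^sub>M lborel) (\<lambda>z. f (fst z) * k (snd z)) = integral\<^sup>L lborel f * integral\<^sup>L lborel k"
proof -
  have [measurable]: "f \<in> borel_measurable borel" "k \<in> borel_measurable borel"
    using f k by auto
  have "(\<integral>\<^sup>+z. norm (f (fst z) * k (snd z)) \<partial>(lborel \<Otimes>\<^sub>M lborel))
      = (\<integral>\<^sup>+x. \<integral>\<^sup>+y. ennreal (norm (f x)) * ennreal (norm (k y)) \<partial>lborel \<partial>lborel)"
    by (subst lborel.nn_integral_fst[symmetric]) (auto simp: norm_mult ennreal_mult)
  also have "\<dots> = (\<integral>\<^sup>+x. ennreal (norm (f x)) * (\<integral>\<^sup>+y. ennreal (norm (k y)) \<partial>lborel) \<partial>lborel)"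
    by (subst nn_integral_cmult) auto
  also have "\<dots> = (\<integral>\<^sup>+x. ennreal (norm (f x)) \<partial>lborel) * (\<integral>\<^sup>+y. ennreal (norm (k y)) \<partial>lborel)"
    by (subst nn_integral_multc) auto
  also have "\<dots> < \<infinity>"
    using f k unfolding integrable_iff_bounded by (simp add: ennreal_mult_less_top)
  finally show int: "integrable (lborel \<Otimes>\<^sub>M lborel) (\<lambda>z. f (fst z) * k (snd z))"
    unfolding integrable_iff_bounded by simp
  have "integral\<^sup>L (lborel \<Otimes>\<^sub>M lborel) (\<lambda>z. f (fst z) * k (snd z))
     = (\<integral>x. \<integral>y. f x * k y \<partial>lborel \<partial>lborel)"
    using lborel_pair.integral_fst'[OF int] by simp
  also have "\<dots> = (\<integral>x. f x * integral\<^sup>L lborel k \<partial>lborel)" by simp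
  also have "\<dots> = integral\<^sup>L lborel f * integral\<^sup>L lborel k" by simp
  finally show "integral\<^sup>L (lborel \<Otimes>\<^sub>M lborel) (\<lambda>z. f (fst z) * k (snd z)) = integral\<^sup>L lborel f * integral\<^sup>L lborel k" .
qed

lemma prod_sep_sum:
  fixes f k :: "'i \<Rightarrow> real \<Rightarrow> complex"
  assumes I: "finite I" and f: "\<And>i. i \<in> I \<Longrightarrow> integrable lborel (f i)" and k: "\<And>i. i \<in> I \<Longrightarrow> integrable lborel (k i)"
  shows "integrable (lborel \<Otimes>\<^sub>M lborel) (\<lambda>z. \<Sum>i\<in>I. f i (fst z) * k i (snd z))"
    and "integral\<^sup>L (lborel \<Otimes>\<^sub>M lborel) (\<lambda>z. \<Sum>i\<in>I. f i (fst z) * k i (snd z)) = (\<Sum>i\<in>I. integral\<^sup>L lborel (f i) * integral\<^sup>L lborel (k i))"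
  using prod_sep[OF f k]
  by (auto intro!: Bochner_Integration.integrable_sum simp: Bochner_Integration.integral_sum)



definition EE :: "int \<Rightarrow> real \<Rightarrow> complex" where
  "EE m y = exp (\<i> * complex_of_real (2 * pi * real_of_int m * y))"

lemma ej_neg: "ej j (- y) = EE j y"
  unfolding ej_def EE_def by simp

lemma cnj_ej: "cnj (ej j y) = EE j y"
  unfolding ej_def EE_def by (simp add: exp_cnj)

lemma ej_eq: "ej j y = cnj (EE j y)"
  by (metis cnj_ej complex_cnj_cnj)

lemma EE_mult: "EE m y * EE n y = EE (m + n) y"
  unfolding EE_def by (simp add: exp_add[symmetric] algebra_simps)

lemma cnj_EE: "cnj (EE m y) = EE (- m) y"
  unfolding EE_def by (simp add: exp_cnj)

lemma norm_EE[simp]: "cmod (EE m y) = 1"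
  unfolding EE_def by (metis norm_exp_i_times)

lemma EE_0[simp]: "EE 0 y = 1"
  unfolding EE_def by simp

lemma EE_cont: "continuous_on S (EE m)"
  unfolding EE_def by (intro continuous_intros)

lemma EE_meas[measurable]: "EE m \<in> borel_measurable borel"
  by (rule borel_measurable_continuous_onI[OF EE_cont])

lemma EE_ortho:
  "integral\<^sup>L lborel (\<lambda>x. complex_of_real (indicator {0..<1} x) * EE m x) = (if m = 0 then 1 else 0)"
proof (cases "m = 0")
  case True
  then show ?thesis by simp
next
  case False
  have si: "set_integrable lborel {0..1} (EE m)"
    by (rule borel_integrable_atLeastAtMost'[OF EE_cont])
  have "integral\<^sup>L lborel (\<lambda>x. complex_of_real (indicator {0..<1} x) * EE m x)
      = (LINT x:{0..<1}|lborel. EE m x)"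
    unfolding set_lebesgue_integral_def by (simp add: scaleR_conv_of_real)
  also have "\<dots> = (LINT x:{0..1}|lborel. EE m x)"
    by (rule set_integral_discrete_difference[where X="{1}"]) auto
  also have "\<dots> = integral {0..1} (EE m)"
    by (rule set_borel_integral_eq_integral(2)[OF si])
  also have "\<dots> = integral {0..1} (\<lambda>t. exp ((\<i> * (2 * pi * of_int m)) * complex_of_real t))"
    unfolding EE_def by (simp add: mult_ac)
  also have "\<dots> = (exp ((\<i> * (2 * pi * of_int m)) * complex_of_real 1) - 1) / (\<i> * (2 * pi * of_int m))"
    by (rule integral_exp) (use False in auto)
  also have "exp ((\<i> * (2 * pi * of_int m)) * complex_of_real 1) = 1"
    using exp_integer_2pi[of "of_int m"] by (simp add: mult_ac)
  finally show ?thesis using False by simp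
qed

lemma integrable_weighted_bounded:
  fixes f :: "real \<Rightarrow> complex" and w :: "real \<Rightarrow> real"
  assumes w: "integrable lborel w" and f: "f \<in> borel_measurable borel" "\<And>x. cmod (f x) \<le> B"
    and wm: "w \<in> borel_measurable borel"
  shows "integrable lborel (\<lambda>x. complex_of_real (w x) * f x)"
proof (rule Bochner_Integration.integrable_bound)
  show "integrable lborel (\<lambda>x. B * w x)" using w by simp
  show "(\<lambda>x. complex_of_real (w x) * f x) \<in> borel_measurable lborel" using f wm by simp
  show "AE x in lborel. norm (complex_of_real (w x) * f x) \<le> norm (B * w x)"
  proof (rule AE_I2)
    fix x
    have "B \<ge> 0" using f(2)[of x] norm_ge_zero order_trans by blast
    then show "norm (complex_of_real (w x) * f x) \<le> norm (B * w x)"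
      using f(2)[of x] mult_left_mono[of "cmod (f x)" B "\<bar>w x\<bar>"] by (simp add: norm_mult abs_mult mult.commute)
  qed
qed



locale dens =
  fixes g :: "real \<Rightarrow> real"
  assumes gD: "dens_D g"
begin

definition w :: "real \<Rightarrow> real" where "w x = g x * indicator {0..<1} x"

lemma g_meas[measurable]: "g \<in> borel_measurable borel"
  using gD unfolding dens_D_def by auto

lemma w_meas[measurable]: "w \<in> borel_measurable borel"
  unfolding w_def by measurable

lemma w_nonneg: "0 \<le> w x"
  using gD unfolding dens_D_def w_def by (auto split: split_indicator)

lemma w_int: "integrable lborel w"
proof -
  have "set_integrable lborel {0..<1} g" using gD unfolding dens_D_def by auto
  then show ?thesis unfolding set_integrable_def w_def by (simp add: mult.commute)
qed

lemma w_int1: "integral\<^sup>L lborel w = 1"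
proof -
  have "(LINT x:{0..<1}|lborel. g x) = 1" using gD unfolding dens_D_def by auto
  then show ?thesis unfolding set_lebesgue_integral_def w_def by (simp add: mult.commute)
qed

lemma g2_int: "integrable lborel (\<lambda>x. indicator {0..<1} x * (g x)\<^sup>2)"
proof -
  have "set_integrable lborel {0..<1} (\<lambda>x. (g x)\<^sup>2)" using gD unfolding dens_D_def by auto
  then show ?thesis unfolding set_integrable_def by simp
qed

lemma intEE: "integrable lborel (\<lambda>x. complex_of_real (w x) * EE m x)"
  by (rule integrable_weighted_bounded[OF w_int]) auto

lemma fc_eq: "fcoef g m = integral\<^sup>L lborel (\<lambda>x. complex_of_real (w x) * EE m x)"
  unfolding fcoef_def set_lebesgue_integral_def w_def cnj_ej
  by (intro Bochner_Integration.integral_cong) (auto simp: scaleR_conv_of_real)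

lemma fc_norm: "cmod (fcoef g m) \<le> 1"
proof -
  have "cmod (fcoef g m) \<le> integral\<^sup>L lborel (\<lambda>x. cmod (complex_of_real (w x) * EE m x))"
    unfolding fc_eq by (rule integral_norm_bound)
  also have "\<dots> = integral\<^sup>L lborel w" by (simp add: norm_mult w_nonneg)
  finally show ?thesis using w_int1 by simp
qed

lemma fc_0: "fcoef g 0 = 1"
  unfolding fc_eq using w_int1 by simp

lemma intw: "integral\<^sup>L lborel (\<lambda>x. complex_of_real (w x)) = 1"
  using w_int1 by simp

lemma fc_neg: "fcoef g (- m) = cnj (fcoef g m)"
proof -
  have "fcoef g (- m) = integral\<^sup>L lborel (\<lambda>x. cnj (complex_of_real (w x) * EE m x))"
    unfolding fc_eq by (simp add: cnj_EE)
  then show ?thesis by (simp only: Bochner_Integration.integral_cnj fc_eq)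
qed

definition A :: "int \<Rightarrow> real \<Rightarrow> complex" where "A j y = EE j y - fcoef g j"

lemma A_meas[measurable]: "A j \<in> borel_measurable borel"
  unfolding A_def by measurable

lemma norm_A: "cmod (A j y) \<le> 2"
proof -
  have "cmod (A j y) \<le> cmod (EE j y) + cmod (fcoef g j)" unfolding A_def by (rule norm_triangle_ineq4)
  then show ?thesis using fc_norm[of j] by simp
qed

lemma A_neg: "A (- j) y = cnj (A j y)"
  unfolding A_def by (simp add: fc_neg cnj_EE)

lemma intA: "integral\<^sup>L lborel (\<lambda>x. complex_of_real (w x) * A j x) = 0"
proof -
  have "integral\<^sup>L lborel (\<lambda>x. complex_of_real (w x) * A j x)
     = integral\<^sup>L lborel (\<lambda>x. complex_of_real (w x) * EE j x) - integral\<^sup>L lborel (\<lambda>x. fcoef g j * complex_of_real (w x))"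
  proof -
    have "(\<lambda>x. complex_of_real (w x) * A j x) = (\<lambda>x. complex_of_real (w x) * EE j x - fcoef g j * complex_of_real (w x))"
      unfolding A_def by (auto simp: algebra_simps)
    moreover have "integrable lborel (\<lambda>x. fcoef g j * complex_of_real (w x))"
      using w_int by (intro integrable_mult_right) simp
    ultimately show ?thesis using intEE by simp
  qed
  also have "\<dots> = 0" unfolding fc_eq[symmetric] using intw by simp
  finally show ?thesis .
qed

definition JJ :: "nat \<Rightarrow> int set" where "JJ k = {j::int. 1 \<le> \<bar>j\<bar> \<and> \<bar>j\<bar> \<le> int k}"

lemma JJ_alt: "JJ k = {- int k..-1} \<union> {1..int k}"
  unfolding JJ_def by auto

lemma JJ_finite[simp]: "finite (JJ k)"
  unfolding JJ_alt by simp

lemma JJ_card: "card (JJ k) = 2 * k"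
proof -
  have "card ({- int k..-1} \<union> {1..int k}) = card {- int k..-1} + card {1..int k}"
    by (rule card_Un_disjoint) auto
  then show ?thesis unfolding JJ_alt by simp
qed

lemma JJ_neg: "j \<in> JJ k \<Longrightarrow> - j \<in> JJ k"
  unfolding JJ_def by auto

lemma hker_eq: "hker g k y1 y2 = (\<Sum>j\<in>JJ k. A j y1 * cnj (A j y2))"
  unfolding hker_def JJ_def A_def ej_neg by (simp add: ej_eq)

lemma hker_cnj: "cnj (hker g k y1 y2) = hker g k y1 y2"
proof -
  have "cnj (hker g k y1 y2) = (\<Sum>j\<in>JJ k. A (- j) y1 * cnj (A (- j) y2))"
    unfolding hker_eq by (simp add: A_neg)
  also have "\<dots> = (\<Sum>j\<in>uminus ` JJ k. A j y1 * cnj (A j y2))"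
    by (subst sum.reindex) (auto simp: inj_on_def)
  also have "uminus ` JJ k = JJ k"
    using JJ_neg by (auto simp: image_iff) (metis JJ_neg minus_minus)
  finally show ?thesis unfolding hker_eq .
qed

lemma hker_real: "Im (hker g k y1 y2) = 0"
  using arg_cong[OF hker_cnj[of k y1 y2], of Im] by simp

lemma hker_sym: "hker g k y2 y1 = hker g k y1 y2"
proof -
  have "hker g k y2 y1 = cnj (hker g k y1 y2)"
    unfolding hker_eq by (simp add: mult.commute)
  then show ?thesis using hker_cnj by simp
qed

lemma hker_bound: "cmod (hker g k y1 y2) \<le> 8 * real k"
proof -
  have "cmod (hker g k y1 y2) \<le> (\<Sum>j\<in>JJ k. cmod (A j y1 * cnj (A j y2)))"
    unfolding hker_eq by (rule norm_sum)
  also have "\<dots> \<le> (\<Sum>j\<in>JJ k. 4)"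
  proof (rule sum_mono)
    fix j
    have "cmod (A j y1) * cmod (A j y2) \<le> 2 * 2"
      by (intro mult_mono norm_A) auto
    then show "cmod (A j y1 * cnj (A j y2)) \<le> 4" by (simp add: norm_mult)
  qed
  also have "\<dots> = 8 * real k" by (simp add: JJ_card)
  finally show ?thesis .
qed

end


context dens
begin

definition G :: "int \<Rightarrow> int \<Rightarrow> complex" where
  "G j l = integral\<^sup>L lborel (\<lambda>x. complex_of_real (w x) * (A j x * cnj (A l x)))"

lemma intG: "integrable lborel (\<lambda>x. complex_of_real (w x) * (A j x * cnj (A l x)))"
proof (rule integrable_weighted_bounded[OF w_int _ _ w_meas])
  show "(\<lambda>x. A j x * cnj (A l x)) \<in> borel_measurable borel" unfolding A_neg[symmetric] by measurable
  fix x
  have "cmod (A j x) * cmod (A l x) \<le> 2 * 2" by (intro mult_mono norm_A) auto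
  then show "cmod (A j x * cnj (A l x)) \<le> 4" by (simp add: norm_mult)
qed

lemma G_eq: "G j l = fcoef g (j - l) - fcoef g j * cnj (fcoef g l)"
proof -
  define a where "a = fcoef g j"
  define b where "b = fcoef g l"
  have eq: "(\<lambda>x. complex_of_real (w x) * (A j x * cnj (A l x)))
     = (\<lambda>x. complex_of_real (w x) * EE (j - l) x - cnj b * (complex_of_real (w x) * EE j x)
           - a * (complex_of_real (w x) * EE (- l) x) + (a * cnj b) * complex_of_real (w x))"
  proof
    fix x
    have "EE (j - l) x = EE j x * EE (- l) x" using EE_mult[of j x "-l"] by simp
    then show "complex_of_real (w x) * (A j x * cnj (A l x)) = complex_of_real (w x) * EE (j - l) x - cnj b * (complex_of_real (w x) * EE j x)
           - a * (complex_of_real (w x) * EE (- l) x) + (a * cnj b) * complex_of_real (w x)"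
      unfolding A_def a_def b_def by (simp add: cnj_EE algebra_simps)
  qed
  have iw: "integrable lborel (\<lambda>x. complex_of_real (w x))" using w_int by simp
  have "G j l = fcoef g (j - l) - cnj b * a - a * fcoef g (- l) + a * cnj b * 1"
    unfolding G_def eq fc_eq intw[symmetric]
    by (subst Bochner_Integration.integral_add Bochner_Integration.integral_diff integral_mult_right_zero,
        (intro Bochner_Integration.integrable_add Bochner_Integration.integrable_diff integrable_mult_right intEE iw)+)+
       (simp add: a_def fc_eq)
  then show ?thesis by (simp add: fc_neg b_def a_def)
qed

lemma G_bound: "cmod (G j l) \<le> cmod (fcoef g (j - l)) + cmod (fcoef g j) * cmod (fcoef g l)"
  unfolding G_eq by (metis norm_triangle_ineq4 norm_mult complex_mod_cnj)

lemma G_swap: "cmod (G l j) = cmod (G j l)"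
proof -
  have "G l j = cnj (G j l)"
    unfolding G_def Bochner_Integration.integral_cnj[symmetric] by (simp add: mult_ac)
  then show ?thesis by simp
qed

end


context dens
begin

lemma bessel: "finite F \<Longrightarrow> (\<Sum>m\<in>F. (cmod (fcoef g m))\<^sup>2) \<le> integral\<^sup>L lborel (\<lambda>x. indicator {0..<1} x * (g x)\<^sup>2)"
proof -
  assume F: "finite F"
  define N where "N = integral\<^sup>L lborel (\<lambda>x. indicator {0..<1} x * (g x)\<^sup>2)"
  define S where "S = (\<Sum>m\<in>F. (cmod (fcoef g m))\<^sup>2)"
  have ind_int: "integrable lborel (\<lambda>x::real. indicator {0..<1} x :: real)" by (rule integrable_real_indicator) auto
  have wa: "\<And>x. indicator {0..<1} x * g x = w x" unfolding w_def by simp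
  have a_eq: "integral\<^sup>L lborel (\<lambda>x. complex_of_real (indicator {0..<1} x * g x) * EE j x) = fcoef g j" for j
    unfolding wa fc_eq ..
  have G_eq': "integral\<^sup>L lborel (\<lambda>x. complex_of_real (indicator {0..<1} x) * (EE j x * cnj (EE l x)))
        = (if j = l then 1 else 0)" for j l
  proof -
    have "EE j x * cnj (EE l x) = EE (j - l) x" for x using EE_mult[of j x "-l"] by (simp add: cnj_EE)
    then show ?thesis using EE_ortho[of "j - l"] by simp
  qed
  have B: "(\<Sum>j\<in>F. (cmod (integral\<^sup>L lborel (\<lambda>x. complex_of_real (indicator {0..<1} x * g x) * EE j x)))\<^sup>2)\<^sup>2
     \<le> integral\<^sup>L lborel (\<lambda>x. indicator {0..<1} x * (g x)\<^sup>2) *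
       (\<Sum>j\<in>F. \<Sum>l\<in>F. cmod (integral\<^sup>L lborel (\<lambda>x. complex_of_real (indicator {0..<1} x * g x) * EE j x))
          * cmod (integral\<^sup>L lborel (\<lambda>x. complex_of_real (indicator {0..<1} x * g x) * EE l x))
          * cmod (integral\<^sup>L lborel (\<lambda>x. complex_of_real (indicator {0..<1} x) * (EE j x * cnj (EE l x)))))"
  proof (rule bessel_gen[OF F])
    show "integrable lborel (\<lambda>x. indicator {0..<1} x * (g x)\<^sup>2)" by (rule g2_int)
    show "integrable lborel (\<lambda>x. complex_of_real (indicator {0..<1} x * g x) * EE j x)" for j
      unfolding wa by (rule intEE)
    show "integrable lborel (\<lambda>x. complex_of_real (indicator {0..<1} x) * (EE j x * cnj (EE l x)))" for j l
      by (rule integrable_weighted_bounded[OF ind_int]) (auto simp: norm_mult cnj_EE)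
  qed auto
  have "(\<Sum>j\<in>F. (cmod (fcoef g j))\<^sup>2)\<^sup>2 \<le> N * (\<Sum>j\<in>F. \<Sum>l\<in>F. cmod (fcoef g j) * cmod (fcoef g l) * cmod (if j = l then 1 else 0 :: complex))"
    using B unfolding a_eq G_eq' N_def .
  also have "(\<Sum>j\<in>F. \<Sum>l\<in>F. cmod (fcoef g j) * cmod (fcoef g l) * cmod (if j = l then 1 else 0 :: complex)) = S"
    unfolding S_def
    using F by (intro sum.cong refl) (simp add: if_distrib power2_eq_square sum.delta cong: if_cong)
  finally have S2: "S\<^sup>2 \<le> N * S" unfolding S_def .
  have "N \<ge> 0" unfolding N_def by (rule Bochner_Integration.integral_nonneg) auto
  moreover have "S \<ge> 0" unfolding S_def by (intro sum_nonneg) auto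
  ultimately have "S \<le> N" using S2
    by (cases "S = 0") (auto simp: power2_eq_square mult_le_cancel_right)
  then show ?thesis unfolding S_def N_def .
qed

lemma l2_summable: "(\<lambda>m. (cmod (fcoef g m))\<^sup>2) summable_on UNIV"
proof (rule nonneg_bdd_above_summable_on)
  show "bdd_above (sum (\<lambda>m. (cmod (fcoef g m))\<^sup>2) ` {F. F \<subseteq> UNIV \<and> finite F})"
    using bessel by (intro bdd_aboveI) auto
qed auto

definition L2sq where "L2sq = (\<Sum>\<^sub>\<infinity>j\<in>(UNIV::int set). (cmod (fcoef g j))\<^sup>2)"

lemma l2norm_eq: "l2norm_fc g = sqrt L2sq"
  unfolding l2norm_fc_def L2sq_def ..

lemma sum_le_L2sq: "finite F \<Longrightarrow> (\<Sum>m\<in>F. (cmod (fcoef g m))\<^sup>2) \<le> L2sq"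
  unfolding L2sq_def by (rule finite_sum_le_infsum[OF l2_summable]) auto

lemma L2sq_ge1: "1 \<le> L2sq"
  using sum_le_L2sq[of "{0}"] by (simp add: fc_0)

lemma shift_le_L2sq: "finite F \<Longrightarrow> (\<Sum>l\<in>F. (cmod (fcoef g (j - l)))\<^sup>2) \<le> L2sq"
proof -
  assume F: "finite F"
  have "(\<Sum>l\<in>F. (cmod (fcoef g (j - l)))\<^sup>2) = (\<Sum>m\<in>(\<lambda>l. j - l) ` F. (cmod (fcoef g m))\<^sup>2)"
    by (subst sum.reindex) (auto simp: inj_on_def)
  also have "\<dots> \<le> L2sq" using F by (intro sum_le_L2sq) auto
  finally show ?thesis .
qed

lemma sumG2: "(\<Sum>j\<in>JJ k. \<Sum>l\<in>JJ k. (cmod (G j l))\<^sup>2) \<le> 4 * L2sq * (2 * real k)"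
proof -
  have row: "(\<Sum>l\<in>JJ k. (cmod (G j l))\<^sup>2) \<le> 4 * L2sq" for j
  proof -
    have "(\<Sum>l\<in>JJ k. (cmod (G j l))\<^sup>2) \<le> (\<Sum>l\<in>JJ k. 2 * (cmod (fcoef g (j - l)))\<^sup>2 + 2 * (cmod (fcoef g l))\<^sup>2)"
    proof (rule sum_mono)
      fix l
      define p where "p = cmod (fcoef g (j - l))"
      define q where "q = cmod (fcoef g j) * cmod (fcoef g l)"
      have q0: "0 \<le> q" unfolding q_def by simp
      have "q \<le> cmod (fcoef g l)" unfolding q_def using fc_norm[of j] by (simp add: mult_left_le_one_le)
      then have q2: "q\<^sup>2 \<le> (cmod (fcoef g l))\<^sup>2" using q0 by (simp add: power_mono)
      have "(cmod (G j l))\<^sup>2 \<le> (p + q)\<^sup>2"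
        using G_bound[of j l] unfolding p_def q_def by (intro power_mono) auto
      also have "\<dots> \<le> 2 * p\<^sup>2 + 2 * q\<^sup>2" using zero_le_power2[of "p - q"] unfolding power2_diff power2_sum by linarith
      finally show "(cmod (G j l))\<^sup>2 \<le> 2 * (cmod (fcoef g (j - l)))\<^sup>2 + 2 * (cmod (fcoef g l))\<^sup>2"
        using q2 unfolding p_def by linarith
    qed
    also have "\<dots> = 2 * (\<Sum>l\<in>JJ k. (cmod (fcoef g (j - l)))\<^sup>2) + 2 * (\<Sum>l\<in>JJ k. (cmod (fcoef g l))\<^sup>2)"
      by (simp add: sum.distrib sum_distrib_left)
    also have "\<dots> \<le> 2 * L2sq + 2 * L2sq"
      using shift_le_L2sq[of "JJ k" j] sum_le_L2sq[of "JJ k"] by simp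
    finally show ?thesis by simp
  qed
  have "(\<Sum>j\<in>JJ k. \<Sum>l\<in>JJ k. (cmod (G j l))\<^sup>2) \<le> of_nat (card (JJ k)) * (4 * L2sq)"
    by (rule sum_bounded_above) (rule row)
  then show ?thesis by (simp add: JJ_card mult_ac)
qed

lemma rowG_l1:
  assumes sm: "(\<lambda>j. cmod (fcoef g j)) summable_on (UNIV::int set)"
  shows "(\<Sum>l\<in>JJ k. cmod (G j l)) \<le> 2 * l1norm_fc g"
proof -
  have le: "finite F \<Longrightarrow> (\<Sum>m\<in>F. cmod (fcoef g m)) \<le> l1norm_fc g" for F
    unfolding l1norm_fc_def by (rule finite_sum_le_infsum[OF sm]) auto
  have "(\<Sum>l\<in>JJ k. cmod (G j l)) \<le> (\<Sum>l\<in>JJ k. cmod (fcoef g (j - l)) + cmod (fcoef g j) * cmod (fcoef g l))"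
    by (rule sum_mono) (rule G_bound)
  also have "\<dots> = (\<Sum>l\<in>JJ k. cmod (fcoef g (j - l))) + cmod (fcoef g j) * (\<Sum>l\<in>JJ k. cmod (fcoef g l))"
    by (simp add: sum.distrib sum_distrib_left)
  also have "(\<Sum>l\<in>JJ k. cmod (fcoef g (j - l))) = (\<Sum>m\<in>(\<lambda>l. j - l) ` JJ k. cmod (fcoef g m))"
    by (subst sum.reindex) (auto simp: inj_on_def)
  also have "\<dots> \<le> l1norm_fc g" by (rule le) simp
  also have "cmod (fcoef g j) * (\<Sum>l\<in>JJ k. cmod (fcoef g l)) \<le> 1 * l1norm_fc g"
    by (intro mult_mono fc_norm le) (auto intro: sum_nonneg)
  finally show ?thesis by simp
qed

end


context dens
begin

lemma zeta_int:
  assumes zm: "\<zeta> \<in> borel_measurable borel"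
    and zn: "(\<integral>\<^sup>+ x. ennreal ((\<zeta> x)\<^sup>2 * g x) * indicator {0..<1} x \<partial>lborel) \<le> 1"
  shows "integrable lborel (\<lambda>x. w x * (\<zeta> x)\<^sup>2)"
    and "integral\<^sup>L lborel (\<lambda>x. w x * (\<zeta> x)\<^sup>2) \<le> 1"
    and "integrable lborel (\<lambda>x. w x * \<zeta> x)"
proof -
  have [measurable]: "\<zeta> \<in> borel_measurable borel" by (rule zm)
  have eq: "(\<integral>\<^sup>+ x. ennreal ((\<zeta> x)\<^sup>2 * g x) * indicator {0..<1} x \<partial>lborel)
      = (\<integral>\<^sup>+ x. ennreal (w x * (\<zeta> x)\<^sup>2) \<partial>lborel)"
    by (intro nn_integral_cong) (auto simp: w_def mult.commute split: split_indicator)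
  have nn: "\<And>x. 0 \<le> w x * (\<zeta> x)\<^sup>2" using w_nonneg by simp
  show i1: "integrable lborel (\<lambda>x. w x * (\<zeta> x)\<^sup>2)"
  proof -
    have "(\<integral>\<^sup>+ x. ennreal (norm (w x * (\<zeta> x)\<^sup>2)) \<partial>lborel) = (\<integral>\<^sup>+ x. ennreal (w x * (\<zeta> x)\<^sup>2) \<partial>lborel)"
      using nn by simp
    also have "\<dots> < \<infinity>" using zn eq by (simp add: order.strict_trans1)
    finally show ?thesis unfolding integrable_iff_bounded by simp
  qed
  have "ennreal (integral\<^sup>L lborel (\<lambda>x. w x * (\<zeta> x)\<^sup>2)) = (\<integral>\<^sup>+ x. ennreal (w x * (\<zeta> x)\<^sup>2) \<partial>lborel)"
    by (rule nn_integral_eq_integral[symmetric]) (use i1 nn in auto)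
  then show "integral\<^sup>L lborel (\<lambda>x. w x * (\<zeta> x)\<^sup>2) \<le> 1"
    using zn eq by (metis ennreal_le_1)
  show "integrable lborel (\<lambda>x. w x * \<zeta> x)"
  proof (rule Bochner_Integration.integrable_bound)
    show "integrable lborel (\<lambda>x. w x * (\<zeta> x)\<^sup>2 + w x)" using i1 w_int by simp
    show "(\<lambda>x. w x * \<zeta> x) \<in> borel_measurable lborel" by simp
    show "AE x in lborel. norm (w x * \<zeta> x) \<le> norm (w x * (\<zeta> x)\<^sup>2 + w x)"
    proof (rule AE_I2)
      fix x
      have "\<bar>\<zeta> x\<bar> \<le> (\<zeta> x)\<^sup>2 + 1"
      proof (cases "\<bar>\<zeta> x\<bar> \<le> 1")
        case False
        then have "\<bar>\<zeta> x\<bar> * 1 \<le> \<bar>\<zeta> x\<bar> * \<bar>\<zeta> x\<bar>" by (intro mult_left_mono) auto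
        then show ?thesis by (simp add: power2_eq_square abs_mult_self_eq)
      next
        case True
        then show ?thesis using zero_le_power2[of "\<zeta> x"] by linarith
      qed
      then have "w x * \<bar>\<zeta> x\<bar> \<le> w x * ((\<zeta> x)\<^sup>2 + 1)" using w_nonneg by (rule mult_left_mono)
      then show "norm (w x * \<zeta> x) \<le> norm (w x * (\<zeta> x)\<^sup>2 + w x)"
        using w_nonneg[of x] by (simp add: abs_mult algebra_simps)
    qed
  qed
qed

definition aa :: "(real \<Rightarrow> real) \<Rightarrow> int \<Rightarrow> complex" where
  "aa \<zeta> j = integral\<^sup>L lborel (\<lambda>x. complex_of_real (w x * \<zeta> x) * A j x)"

definition SS :: "nat \<Rightarrow> (real \<Rightarrow> real) \<Rightarrow> real" where
  "SS k \<zeta> = (\<Sum>j\<in>JJ k. (cmod (aa \<zeta> j))\<^sup>2)"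

lemma SS_nonneg: "0 \<le> SS k \<zeta>"
  unfolding SS_def by (intro sum_nonneg) auto

lemma SS_basic:
  assumes zm: "\<zeta> \<in> borel_measurable borel"
    and zn: "(\<integral>\<^sup>+ x. ennreal ((\<zeta> x)\<^sup>2 * g x) * indicator {0..<1} x \<partial>lborel) \<le> 1"
  shows "(SS k \<zeta>)\<^sup>2 \<le> (\<Sum>j\<in>JJ k. \<Sum>l\<in>JJ k. cmod (aa \<zeta> j) * cmod (aa \<zeta> l) * cmod (G j l))"
proof -
  have [measurable]: "\<zeta> \<in> borel_measurable borel" by (rule zm)
  note zi = zeta_int[OF zm zn]
  have B: "(SS k \<zeta>)\<^sup>2 \<le> integral\<^sup>L lborel (\<lambda>x. w x * (\<zeta> x)\<^sup>2) * (\<Sum>j\<in>JJ k. \<Sum>l\<in>JJ k. cmod (aa \<zeta> j) * cmod (aa \<zeta> l) * cmod (G j l))"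
    unfolding SS_def aa_def G_def
  proof (rule bessel_gen)
    show "integrable lborel (\<lambda>x. w x * (\<zeta> x)\<^sup>2)" by (rule zi(1))
    show "integrable lborel (\<lambda>x. complex_of_real (w x * \<zeta> x) * A j x)" for j
      by (rule integrable_weighted_bounded[OF zi(3) _ norm_A]) auto
    show "integrable lborel (\<lambda>x. complex_of_real (w x) * (A j x * cnj (A l x)))" for j l
      by (rule intG)
  qed (auto simp: w_nonneg)
  have R0: "0 \<le> (\<Sum>j\<in>JJ k. \<Sum>l\<in>JJ k. cmod (aa \<zeta> j) * cmod (aa \<zeta> l) * cmod (G j l))"
    by (intro sum_nonneg) auto
  show ?thesis
    using B mult_right_mono[OF zi(2) R0] by simp
qed

lemma SS_le_of_R:
  fixes S R X :: real
  assumes "S\<^sup>2 \<le> R" "R \<le> S * X" "0 \<le> S" "0 \<le> X"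
  shows "S \<le> X"
proof (cases "S = 0")
  case False
  have "S\<^sup>2 \<le> S * X" using assms(1,2) by linarith
  then have "S * S \<le> S * X" by (simp only: power2_eq_square)
  then show ?thesis using False assms(3) by (simp add: mult_le_cancel_left)
qed (use assms in simp)

lemma SS_bound_C:
  assumes zm: "\<zeta> \<in> borel_measurable borel"
    and zn: "(\<integral>\<^sup>+ x. ennreal ((\<zeta> x)\<^sup>2 * g x) * indicator {0..<1} x \<partial>lborel) \<le> 1"
  shows "SS k \<zeta> \<le> sqrt (\<Sum>j\<in>JJ k. \<Sum>l\<in>JJ k. (cmod (G j l))\<^sup>2)"
proof (rule SS_le_of_R[OF SS_basic[OF zm zn]])
  let ?f = "\<lambda>p. cmod (aa \<zeta> (fst p)) * cmod (aa \<zeta> (snd p))"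
  let ?h = "\<lambda>p. cmod (G (fst p) (snd p))"
  have "(\<Sum>j\<in>JJ k. \<Sum>l\<in>JJ k. cmod (aa \<zeta> j) * cmod (aa \<zeta> l) * cmod (G j l))
      = (\<Sum>p\<in>JJ k \<times> JJ k. \<bar>?f p\<bar> * \<bar>?h p\<bar>)"
    by (simp add: sum.cartesian_product case_prod_beta)
  also have "\<dots> \<le> L2_set ?f (JJ k \<times> JJ k) * L2_set ?h (JJ k \<times> JJ k)"
    by (rule L2_set_mult_ineq)
  also have "L2_set ?f (JJ k \<times> JJ k) = sqrt ((SS k \<zeta>)\<^sup>2)"
    unfolding L2_set_def SS_def power2_eq_square sum_product
    by (simp add: sum.cartesian_product mult_ac case_prod_beta)
  also have "\<dots> = SS k \<zeta>" using SS_nonneg by simp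
  also have "L2_set ?h (JJ k \<times> JJ k) = sqrt (\<Sum>j\<in>JJ k. \<Sum>l\<in>JJ k. (cmod (G j l))\<^sup>2)"
    unfolding L2_set_def by (simp add: sum.cartesian_product case_prod_beta)
  finally show "(\<Sum>j\<in>JJ k. \<Sum>l\<in>JJ k. cmod (aa \<zeta> j) * cmod (aa \<zeta> l) * cmod (G j l))
      \<le> SS k \<zeta> * sqrt (\<Sum>j\<in>JJ k. \<Sum>l\<in>JJ k. (cmod (G j l))\<^sup>2)" .
qed (auto intro!: SS_nonneg sum_nonneg)

lemma SS_bound_l1:
  assumes zm: "\<zeta> \<in> borel_measurable borel"
    and zn: "(\<integral>\<^sup>+ x. ennreal ((\<zeta> x)\<^sup>2 * g x) * indicator {0..<1} x \<partial>lborel) \<le> 1"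
    and sm: "(\<lambda>j. cmod (fcoef g j)) summable_on (UNIV::int set)"
  shows "SS k \<zeta> \<le> 2 * l1norm_fc g"
proof (rule SS_le_of_R[OF SS_basic[OF zm zn]])
  let ?a = "\<lambda>j. cmod (aa \<zeta> j)"
  have "(\<Sum>j\<in>JJ k. \<Sum>l\<in>JJ k. ?a j * ?a l * cmod (G j l))
      \<le> (\<Sum>j\<in>JJ k. \<Sum>l\<in>JJ k. ((?a j)\<^sup>2 / 2) * cmod (G j l) + ((?a l)\<^sup>2 / 2) * cmod (G j l))"
  proof (intro sum_mono)
    fix j l
    have "?a j * ?a l \<le> (?a j)\<^sup>2 / 2 + (?a l)\<^sup>2 / 2"
      using zero_le_power2[of "?a j - ?a l"] unfolding power2_diff by linarith
    then show "?a j * ?a l * cmod (G j l) \<le> ((?a j)\<^sup>2 / 2) * cmod (G j l) + ((?a l)\<^sup>2 / 2) * cmod (G j l)"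
      by (metis distrib_right mult_right_mono norm_ge_zero)
  qed
  also have "\<dots> = (\<Sum>j\<in>JJ k. \<Sum>l\<in>JJ k. ((?a j)\<^sup>2 / 2) * cmod (G j l)) + (\<Sum>j\<in>JJ k. \<Sum>l\<in>JJ k. ((?a l)\<^sup>2 / 2) * cmod (G j l))"
    by (simp add: sum.distrib)
  also have "(\<Sum>j\<in>JJ k. \<Sum>l\<in>JJ k. ((?a l)\<^sup>2 / 2) * cmod (G j l)) = (\<Sum>j\<in>JJ k. \<Sum>l\<in>JJ k. ((?a j)\<^sup>2 / 2) * cmod (G j l))"
    by (subst sum.swap, intro sum.cong refl, simp add: G_swap)
  also have "(\<Sum>j\<in>JJ k. \<Sum>l\<in>JJ k. ((?a j)\<^sup>2 / 2) * cmod (G j l)) + (\<Sum>j\<in>JJ k. \<Sum>l\<in>JJ k. ((?a j)\<^sup>2 / 2) * cmod (G j l))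
      = (\<Sum>j\<in>JJ k. (?a j)\<^sup>2 * (\<Sum>l\<in>JJ k. cmod (G j l)))"
    unfolding sum.distrib[symmetric] sum_distrib_left by (intro sum.cong refl) simp
  also have "\<dots> \<le> (\<Sum>j\<in>JJ k. (?a j)\<^sup>2 * (2 * l1norm_fc g))"
    by (intro sum_mono mult_left_mono rowG_l1[OF sm]) auto
  also have "\<dots> = SS k \<zeta> * (2 * l1norm_fc g)"
    unfolding SS_def by (simp add: sum_distrib_right)
  finally show "(\<Sum>j\<in>JJ k. \<Sum>l\<in>JJ k. ?a j * ?a l * cmod (G j l)) \<le> SS k \<zeta> * (2 * l1norm_fc g)" .
  have "0 \<le> l1norm_fc g" unfolding l1norm_fc_def by (rule infsum_nonneg) auto
  then show "0 \<le> 2 * l1norm_fc g" by simp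
qed (rule SS_nonneg)

end


context dens
begin

lemma hker_meas[measurable]: "(\<lambda>x. hker g k x y) \<in> borel_measurable borel"
  unfolding hker_eq A_neg[symmetric] by measurable

lemma mean_zero:
  shows "set_integrable lborel {0..<1} (\<lambda>y1. hker g k y1 y2 * complex_of_real (g y1))"
    and "(LINT y1:{0..<1}|lborel. hker g k y1 y2 * complex_of_real (g y1)) = 0"
proof -
  have eq: "(\<lambda>x. indicator {0..<1} x *\<^sub>R (hker g k x y2 * complex_of_real (g x)))
      = (\<lambda>x. complex_of_real (w x) * hker g k x y2)"
    by (auto simp: w_def scaleR_conv_of_real mult_ac split: split_indicator)
  show "set_integrable lborel {0..<1} (\<lambda>y1. hker g k y1 y2 * complex_of_real (g y1))"
    unfolding set_integrable_def eq
    by (rule integrable_weighted_bounded[OF w_int _ hker_bound w_meas]) measurable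
  have eq2: "(\<lambda>x. complex_of_real (w x) * hker g k x y2)
      = (\<lambda>x. \<Sum>j\<in>JJ k. cnj (A j y2) * (complex_of_real (w x) * A j x))"
    unfolding hker_eq by (auto simp: sum_distrib_left mult_ac)
  have "integral\<^sup>L lborel (\<lambda>x. complex_of_real (w x) * hker g k x y2) = 0"
    unfolding eq2
    by (subst Bochner_Integration.integral_sum)
       (auto intro!: integrable_mult_right integrable_weighted_bounded[OF w_int _ norm_A w_meas] simp: intA)
  then show "(LINT y1:{0..<1}|lborel. hker g k y1 y2 * complex_of_real (g y1)) = 0"
    unfolding set_lebesgue_integral_def eq .
qed

lemma hh_expand: "hker g k a b * cnj (hker g k a b)
   = (\<Sum>j\<in>JJ k. \<Sum>l\<in>JJ k. (A j a * cnj (A l a)) * (cnj (A j b) * A l b))"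
proof -
  have "hker g k a b * cnj (hker g k a b) = (\<Sum>j\<in>JJ k. A j a * cnj (A j b)) * (\<Sum>l\<in>JJ k. cnj (A l a) * A l b)"
    unfolding hker_eq by simp
  also have "\<dots> = (\<Sum>j\<in>JJ k. \<Sum>l\<in>JJ k. (A j a * cnj (A j b)) * (cnj (A l a) * A l b))"
    by (rule sum_product)
  finally show ?thesis by (simp add: mult_ac)
qed

lemma Re_hh: "Re (complex_of_real c * (hker g k a b * cnj (hker g k a b))) = c * (Re (hker g k a b))\<^sup>2"
  using hker_real[of k a b] by (simp add: power2_eq_square)

lemma B_part:
  "(LINT y1:{0..<1}|lborel. (Re (hker g k y1 y2))\<^sup>2 * g y1)
     \<le> 4 * (2 * real k) * sqrt (\<Sum>j\<in>JJ k. \<Sum>l\<in>JJ k. (cmod (G j l))\<^sup>2)"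
proof -
  define c where "c = (\<lambda>j l. cnj (A j y2) * A l y2)"
  have eq1: "(\<lambda>x. indicator {0..<1} x *\<^sub>R ((Re (hker g k x y2))\<^sup>2 * g x))
      = (\<lambda>x. Re (complex_of_real (w x) * (hker g k x y2 * cnj (hker g k x y2))))"
    unfolding Re_hh by (auto simp: w_def mult_ac split: split_indicator)
  have eq2: "(\<lambda>x. complex_of_real (w x) * (hker g k x y2 * cnj (hker g k x y2)))
     = (\<lambda>x. \<Sum>j\<in>JJ k. \<Sum>l\<in>JJ k. c j l * (complex_of_real (w x) * (A j x * cnj (A l x))))"
    unfolding hh_expand c_def by (auto simp: sum_distrib_left mult_ac)
  have int: "integrable lborel (\<lambda>x. complex_of_real (w x) * (hker g k x y2 * cnj (hker g k x y2)))"
    unfolding eq2 by (intro Bochner_Integration.integrable_sum integrable_mult_right intG)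
  have ival: "integral\<^sup>L lborel (\<lambda>x. complex_of_real (w x) * (hker g k x y2 * cnj (hker g k x y2)))
      = (\<Sum>j\<in>JJ k. \<Sum>l\<in>JJ k. c j l * G j l)"
    unfolding eq2 G_def
    by (subst Bochner_Integration.integral_sum, (intro Bochner_Integration.integrable_sum integrable_mult_right intG),
        intro sum.cong refl, subst Bochner_Integration.integral_sum, (intro integrable_mult_right intG), simp)
  have "(LINT y1:{0..<1}|lborel. (Re (hker g k y1 y2))\<^sup>2 * g y1)
      = Re (\<Sum>j\<in>JJ k. \<Sum>l\<in>JJ k. c j l * G j l)"
    unfolding set_lebesgue_integral_def eq1 integral_Re[OF int] ival ..
  also have "\<dots> \<le> cmod (\<Sum>j\<in>JJ k. \<Sum>l\<in>JJ k. c j l * G j l)" by (rule complex_Re_le_cmod)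
  also have "\<dots> \<le> (\<Sum>j\<in>JJ k. \<Sum>l\<in>JJ k. 4 * cmod (G j l))"
  proof (rule order_trans[OF norm_sum], rule sum_mono, rule order_trans[OF norm_sum], rule sum_mono)
    fix j l
    have "cmod (c j l) \<le> 2 * 2" unfolding c_def norm_mult complex_mod_cnj
      by (intro mult_mono norm_A) auto
    then show "cmod (c j l * G j l) \<le> 4 * cmod (G j l)"
      unfolding norm_mult by (intro mult_right_mono) auto
  qed
  also have "\<dots> = 4 * (\<Sum>p\<in>JJ k \<times> JJ k. \<bar>1\<bar> * \<bar>cmod (G (fst p) (snd p))\<bar>)"
    by (simp add: sum.cartesian_product case_prod_beta sum_distrib_left)
  also have "\<dots> \<le> 4 * (L2_set (\<lambda>_. 1) (JJ k \<times> JJ k) * L2_set (\<lambda>p. cmod (G (fst p) (snd p))) (JJ k \<times> JJ k))"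
    by (intro mult_left_mono L2_set_mult_ineq) auto
  also have "L2_set (\<lambda>_. 1) (JJ k \<times> JJ k) = 2 * real k"
  proof -
    have "sqrt (4 * (real k * real k)) = 2 * real k"
    proof -
      have s4: "sqrt 4 = (2::real)" using real_sqrt_abs[of 2] by simp
      show ?thesis by (simp add: real_sqrt_mult s4)
    qed
    then show ?thesis unfolding L2_set_def by (simp add: card_cartesian_product JJ_card)
  qed
  also have "L2_set (\<lambda>p. cmod (G (fst p) (snd p))) (JJ k \<times> JJ k) = sqrt (\<Sum>j\<in>JJ k. \<Sum>l\<in>JJ k. (cmod (G j l))\<^sup>2)"
    unfolding L2_set_def by (simp add: sum.cartesian_product case_prod_beta)
  finally show ?thesis by (simp add: mult_ac)
qed

end


context dens
begin

lemma C_part: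
  "(LINT z:{0..<1}\<times>{0..<1}|(lborel \<Otimes>\<^sub>M lborel).
      (Re (hker g k (fst z) (snd z)))\<^sup>2 * g (fst z) * g (snd z))
   = (\<Sum>j\<in>JJ k. \<Sum>l\<in>JJ k. (cmod (G j l))\<^sup>2)"
proof -
  define F where "F = (\<lambda>p x. complex_of_real (w x) * (A (fst p) x * cnj (A (snd p) x)))"
  define K where "K = (\<lambda>p y. complex_of_real (w y) * (cnj (A (fst p) y) * A (snd p) y))"
  have FK: "(\<Sum>p\<in>JJ k \<times> JJ k. F p a * K p b) = complex_of_real (w a * w b) * (hker g k a b * cnj (hker g k a b))" for a b
    unfolding hh_expand F_def K_def sum.cartesian_product sum_distrib_left
    by (intro sum.cong refl) (auto simp: mult_ac)
  have eq1: "(\<lambda>z. indicator ({0..<1}\<times>{0..<1}) z *\<^sub>R ((Re (hker g k (fst z) (snd z)))\<^sup>2 * g (fst z) * g (snd z)))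
     = (\<lambda>z. Re (\<Sum>p\<in>JJ k \<times> JJ k. F p (fst z) * K p (snd z)))"
  proof
    fix z :: "real \<times> real"
    obtain a b where z: "z = (a, b)" by (cases z)
    show "indicator ({0..<1}\<times>{0..<1}) z *\<^sub>R ((Re (hker g k (fst z) (snd z)))\<^sup>2 * g (fst z) * g (snd z))
        = Re (\<Sum>p\<in>JJ k \<times> JJ k. F p (fst z) * K p (snd z))"
      unfolding z FK Re_hh by (auto simp: w_def split: split_indicator)
  qed
  have iF: "p \<in> JJ k \<times> JJ k \<Longrightarrow> integrable lborel (F p)" for p
    unfolding F_def by (rule intG)
  have KF: "K p = (\<lambda>y. cnj (F p y))" for p
    unfolding F_def K_def by (auto simp: mult_ac)
  have iK: "p \<in> JJ k \<times> JJ k \<Longrightarrow> integrable lborel (K p)" for p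
    unfolding KF using iF[of p] by simp
  have fin: "finite (JJ k \<times> JJ k)" by simp
  note ps = prod_sep_sum[OF fin iF iK]
  have "(LINT z:{0..<1}\<times>{0..<1}|(lborel \<Otimes>\<^sub>M lborel).
      (Re (hker g k (fst z) (snd z)))\<^sup>2 * g (fst z) * g (snd z))
     = integral\<^sup>L (lborel \<Otimes>\<^sub>M lborel) (\<lambda>z. Re (\<Sum>p\<in>JJ k \<times> JJ k. F p (fst z) * K p (snd z)))"
    unfolding set_lebesgue_integral_def eq1 ..
  also have "\<dots> = Re (integral\<^sup>L (lborel \<Otimes>\<^sub>M lborel) (\<lambda>z. \<Sum>p\<in>JJ k \<times> JJ k. F p (fst z) * K p (snd z)))"
    by (rule integral_Re[OF ps(1)])
  also have "\<dots> = Re (\<Sum>p\<in>JJ k \<times> JJ k. integral\<^sup>L lborel (F p) * integral\<^sup>L lborel (K p))"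
    using ps(2) by simp
  also have "\<dots> = Re (\<Sum>p\<in>JJ k \<times> JJ k. complex_of_real ((cmod (G (fst p) (snd p)))\<^sup>2))"
  proof -
    have hz: "\<And>z::complex. Re z * Re z + Im z * Im z = cmod z * cmod z"
      by (metis cmod_power2 power2_eq_square)
    have IF: "integral\<^sup>L lborel (F p) = G (fst p) (snd p)" for p unfolding F_def G_def ..
    have IK: "integral\<^sup>L lborel (K p) = cnj (G (fst p) (snd p))" for p
      unfolding KF Bochner_Integration.integral_cnj IF ..
    show ?thesis by (simp only: IF IK) (simp add: hz power2_eq_square)
  qed
  also have "\<dots> = (\<Sum>j\<in>JJ k. \<Sum>l\<in>JJ k. (cmod (G j l))\<^sup>2)"
    by (simp add: sum.cartesian_product case_prod_beta)
  finally show ?thesis .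
qed

lemma D_part:
  assumes zm: "\<zeta> \<in> borel_measurable borel"
    and zn: "(\<integral>\<^sup>+ x. ennreal ((\<zeta> x)\<^sup>2 * g x) * indicator {0..<1} x \<partial>lborel) \<le> 1"
    and xm: "\<xi> \<in> borel_measurable borel"
    and xn: "(\<integral>\<^sup>+ x. ennreal ((\<xi> x)\<^sup>2 * g x) * indicator {0..<1} x \<partial>lborel) \<le> 1"
  shows "(LINT z:{0..<1}\<times>{0..<1}|(lborel \<Otimes>\<^sub>M lborel).
        Re (hker g k (fst z) (snd z)) * \<zeta> (fst z) * \<xi> (snd z) * g (fst z) * g (snd z))
      \<le> sqrt (SS k \<zeta>) * sqrt (SS k \<xi>)"
proof -
  have [measurable]: "\<zeta> \<in> borel_measurable borel" "\<xi> \<in> borel_measurable borel" by (rule zm, rule xm)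
  define F where "F = (\<lambda>j x. complex_of_real (w x * \<zeta> x) * A j x)"
  define K where "K = (\<lambda>j y. complex_of_real (w y * \<xi> y) * cnj (A j y))"
  have FK: "(\<Sum>j\<in>JJ k. F j a * K j b) = complex_of_real (w a * \<zeta> a * (w b * \<xi> b)) * hker g k a b" for a b
    unfolding hker_eq F_def K_def sum_distrib_left
    by (intro sum.cong refl) (auto simp: mult_ac)
  have eq1: "(\<lambda>z. indicator ({0..<1}\<times>{0..<1}) z *\<^sub>R (Re (hker g k (fst z) (snd z)) * \<zeta> (fst z) * \<xi> (snd z) * g (fst z) * g (snd z)))
     = (\<lambda>z. Re (\<Sum>j\<in>JJ k. F j (fst z) * K j (snd z)))"
  proof
    fix z :: "real \<times> real"
    obtain a b where z: "z = (a, b)" by (cases z)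
    show "indicator ({0..<1}\<times>{0..<1}) z *\<^sub>R (Re (hker g k (fst z) (snd z)) * \<zeta> (fst z) * \<xi> (snd z) * g (fst z) * g (snd z))
        = Re (\<Sum>j\<in>JJ k. F j (fst z) * K j (snd z))"
      unfolding z FK by (auto simp: w_def split: split_indicator)
  qed
  have iF: "integrable lborel (F j)" for j
    unfolding F_def by (rule integrable_weighted_bounded[OF zeta_int(3)[OF zm zn] _ norm_A]) auto
  have KF: "K j = (\<lambda>y. cnj (complex_of_real (w y * \<xi> y) * A j y))" for j
    unfolding K_def by auto
  have iK: "integrable lborel (K j)" for j
  proof -
    have "integrable lborel (\<lambda>y. complex_of_real (w y * \<xi> y) * A j y)"
      by (rule integrable_weighted_bounded[OF zeta_int(3)[OF xm xn] _ norm_A]) auto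
    from integrable_cnj[OF this] show ?thesis unfolding KF .
  qed
  note ps = prod_sep_sum[OF JJ_finite iF iK]
  have "(LINT z:{0..<1}\<times>{0..<1}|(lborel \<Otimes>\<^sub>M lborel).
        Re (hker g k (fst z) (snd z)) * \<zeta> (fst z) * \<xi> (snd z) * g (fst z) * g (snd z))
     = Re (\<Sum>j\<in>JJ k. integral\<^sup>L lborel (F j) * integral\<^sup>L lborel (K j))"
    unfolding set_lebesgue_integral_def eq1 integral_Re[OF ps(1)] ps(2) ..
  also have "\<dots> = Re (\<Sum>j\<in>JJ k. aa \<zeta> j * cnj (aa \<xi> j))"
    unfolding KF Bochner_Integration.integral_cnj F_def aa_def ..
  also have "\<dots> \<le> cmod (\<Sum>j\<in>JJ k. aa \<zeta> j * cnj (aa \<xi> j))" by (rule complex_Re_le_cmod)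
  also have "\<dots> \<le> (\<Sum>j\<in>JJ k. \<bar>cmod (aa \<zeta> j)\<bar> * \<bar>cmod (aa \<xi> j)\<bar>)"
    by (rule order_trans[OF norm_sum]) (simp add: norm_mult)
  also have "\<dots> \<le> L2_set (\<lambda>j. cmod (aa \<zeta> j)) (JJ k) * L2_set (\<lambda>j. cmod (aa \<xi> j)) (JJ k)"
    by (rule L2_set_mult_ineq)
  also have "\<dots> = sqrt (SS k \<zeta>) * sqrt (SS k \<xi>)"
    unfolding L2_set_def SS_def ..
  finally show ?thesis .
qed

end


lemma powr34_sq: "0 \<le> (r::real) \<Longrightarrow> (r powr (3/4))\<^sup>2 = r * sqrt r"
proof (cases "r = 0")
  case False
  assume r: "0 \<le> r"
  then have rp: "0 < r" using False by simp
  have "(r powr (3/4))\<^sup>2 = r powr (3/4) * r powr (3/4)" by (simp add: power2_eq_square)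
  also have "\<dots> = r powr (3/2)" by (simp add: powr_add[symmetric])
  also have "\<dots> = r powr 1 * r powr (1/2)" using powr_add[of r 1 "1/2"] rp by simp
  also have "\<dots> = r * sqrt r" using rp by (simp add: powr_half_sqrt)
  finally show ?thesis .
qed simp

theorem corollaryA5:
  fixes g :: "real \<Rightarrow> real" and k :: nat
  assumes g: "dens_D g"
  defines "h \<equiv> hker g k"
  defines "A \<equiv> 8 * real k"
    and "B \<equiv> 3 * l2norm_fc g * (2 * real k) powr (3/4)"
    and "C \<equiv> 2 * l2norm_fc g * (2 * real k) powr (1/2)"
  shows "(\<forall>y1\<in>{0..<1}. \<forall>y2\<in>{0..<1}. Im (h y1 y2) = 0)
    \<and> (\<exists>M. \<forall>y1\<in>{0..<1}. \<forall>y2\<in>{0..<1}. cmod (h y1 y2) \<le> M)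
    \<and> (\<forall>y1\<in>{0..<1}. \<forall>y2\<in>{0..<1}. h y1 y2 = h y2 y1)
    \<and> (\<forall>y2\<in>{0..<1}. set_integrable lborel {0..<1} (\<lambda>y1. h y1 y2 * complex_of_real (g y1))
          \<and> (LINT y1:{0..<1}|lborel. h y1 y2 * complex_of_real (g y1)) = 0)
    \<and> (\<forall>y1\<in>{0..<1}. \<forall>y2\<in>{0..<1}. cmod (h y1 y2) \<le> A)
    \<and> (\<forall>y2\<in>{0..<1}. (LINT y1:{0..<1}|lborel. (Re (h y1 y2))\<^sup>2 * g y1) \<le> B\<^sup>2)
    \<and> (LINT z:{0..<1}\<times>{0..<1}|(lborel \<Otimes>\<^sub>M lborel).
          (Re (h (fst z) (snd z)))\<^sup>2 * g (fst z) * g (snd z)) \<le> C\<^sup>2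
    \<and> (\<forall>\<zeta> \<xi>. \<zeta> \<in> borel_measurable borel \<longrightarrow> \<xi> \<in> borel_measurable borel
         \<longrightarrow> (\<integral>\<^sup>+ x. ennreal ((\<zeta> x)\<^sup>2 * g x) * indicator {0..<1} x \<partial>lborel) \<le> 1
         \<longrightarrow> (\<integral>\<^sup>+ x. ennreal ((\<xi> x)\<^sup>2 * g x) * indicator {0..<1} x \<partial>lborel) \<le> 1
         \<longrightarrow> (LINT z:{0..<1}\<times>{0..<1}|(lborel \<Otimes>\<^sub>M lborel).
               Re (h (fst z) (snd z)) * \<zeta> (fst z) * \<xi> (snd z) * g (fst z) * g (snd z)) \<le> C)
    \<and> (L2w g = L2w (\<lambda>_. 1) \<longrightarrow> (\<lambda>j. cmod (fcoef g j)) summable_on (UNIV::int set) \<longrightarrow>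
        (\<forall>\<zeta> \<xi>. \<zeta> \<in> borel_measurable borel \<longrightarrow> \<xi> \<in> borel_measurable borel
         \<longrightarrow> (\<integral>\<^sup>+ x. ennreal ((\<zeta> x)\<^sup>2 * g x) * indicator {0..<1} x \<partial>lborel) \<le> 1
         \<longrightarrow> (\<integral>\<^sup>+ x. ennreal ((\<xi> x)\<^sup>2 * g x) * indicator {0..<1} x \<partial>lborel) \<le> 1
         \<longrightarrow> (LINT z:{0..<1}\<times>{0..<1}|(lborel \<Otimes>\<^sub>M lborel).
               Re (h (fst z) (snd z)) * \<zeta> (fst z) * \<xi> (snd z) * g (fst z) * g (snd z))
             \<le> 4 * l1norm_fc g))"
proof -
  have D: "dens g" using g by (rule dens.intro)
  define L where "L = dens.L2sq g"
  define X where "X = sqrt (\<Sum>j\<in>dens.JJ k. \<Sum>l\<in>dens.JJ k. (cmod (dens.G g j l))\<^sup>2)"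
  define r where "r = 2 * real k"
  have r0: "0 \<le> r" unfolding r_def by simp
  have L1: "1 \<le> L" unfolding L_def by (rule dens.L2sq_ge1[OF D])
  have l2: "l2norm_fc g = sqrt L" unfolding L_def by (rule dens.l2norm_eq[OF D])
  have Ceq: "C = 2 * sqrt L * sqrt r"
    unfolding C_def l2 r_def using powr_half_sqrt[of "2 * real k"] by simp
  have C2: "C\<^sup>2 = 4 * L * r"
    unfolding Ceq using L1 r0 by (simp add: power_mult_distrib)
  have G2: "(\<Sum>j\<in>dens.JJ k. \<Sum>l\<in>dens.JJ k. (cmod (dens.G g j l))\<^sup>2) \<le> 4 * L * r"
    unfolding L_def r_def by (rule dens.sumG2[OF D])
  have X0: "0 \<le> X" unfolding X_def by (rule real_sqrt_ge_zero) (auto intro!: sum_nonneg)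
  have XC: "X \<le> C"
  proof -
    have "X \<le> sqrt (4 * L * r)" unfolding X_def using G2 by (rule real_sqrt_le_mono)
    also have "\<dots> = C" using Ceq L1 r0 by (simp add: real_sqrt_mult)
    finally show ?thesis .
  qed
  have B2: "B\<^sup>2 = 9 * L * (r * sqrt r)"
    unfolding B_def l2 r_def[symmetric] using L1 r0 by (simp add: power_mult_distrib powr34_sq)
  have Dgen: "\<And>\<zeta> \<xi> Y. \<zeta> \<in> borel_measurable borel \<Longrightarrow> \<xi> \<in> borel_measurable borel
         \<Longrightarrow> (\<integral>\<^sup>+ x. ennreal ((\<zeta> x)\<^sup>2 * g x) * indicator {0..<1} x \<partial>lborel) \<le> 1
         \<Longrightarrow> (\<integral>\<^sup>+ x. ennreal ((\<xi> x)\<^sup>2 * g x) * indicator {0..<1} x \<partial>lborel) \<le> 1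
         \<Longrightarrow> Y \<ge> 0 \<Longrightarrow> dens.SS g k \<zeta> \<le> Y \<Longrightarrow> dens.SS g k \<xi> \<le> Y
         \<Longrightarrow> (LINT z:{0..<1}\<times>{0..<1}|(lborel \<Otimes>\<^sub>M lborel).
               Re (h (fst z) (snd z)) * \<zeta> (fst z) * \<xi> (snd z) * g (fst z) * g (snd z)) \<le> Y"
  proof -
    fix \<zeta> \<xi> :: "real \<Rightarrow> real" and Y :: real
    assume zm: "\<zeta> \<in> borel_measurable borel" and xm: "\<xi> \<in> borel_measurable borel"
      and zn: "(\<integral>\<^sup>+ x. ennreal ((\<zeta> x)\<^sup>2 * g x) * indicator {0..<1} x \<partial>lborel) \<le> 1"
      and xn: "(\<integral>\<^sup>+ x. ennreal ((\<xi> x)\<^sup>2 * g x) * indicator {0..<1} x \<partial>lborel) \<le> 1"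
      and Y0: "Y \<ge> 0" and sz: "dens.SS g k \<zeta> \<le> Y" and sx: "dens.SS g k \<xi> \<le> Y"
    have "(LINT z:{0..<1}\<times>{0..<1}|(lborel \<Otimes>\<^sub>M lborel).
               Re (h (fst z) (snd z)) * \<zeta> (fst z) * \<xi> (snd z) * g (fst z) * g (snd z))
         \<le> sqrt (dens.SS g k \<zeta>) * sqrt (dens.SS g k \<xi>)"
      unfolding h_def by (rule dens.D_part[OF D zm zn xm xn])
    also have "\<dots> \<le> sqrt Y * sqrt Y"
      using Y0 by (intro mult_mono real_sqrt_le_mono sz sx) (auto intro: dens.SS_nonneg[OF D])
    also have "\<dots> = Y" using Y0 by simp
    finally show "(LINT z:{0..<1}\<times>{0..<1}|(lborel \<Otimes>\<^sub>M lborel).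
               Re (h (fst z) (snd z)) * \<zeta> (fst z) * \<xi> (snd z) * g (fst z) * g (snd z)) \<le> Y" .
  qed
  show ?thesis
  proof (intro conjI ballI allI impI)
    fix y1 y2 :: real
    show "Im (h y1 y2) = 0" unfolding h_def by (rule dens.hker_real[OF D])
    show "h y1 y2 = h y2 y1" unfolding h_def by (rule dens.hker_sym[OF D, symmetric])
    show "cmod (h y1 y2) \<le> A" unfolding h_def A_def by (rule dens.hker_bound[OF D])
  next
    show "\<exists>M. \<forall>y1\<in>{0..<1}. \<forall>y2\<in>{0..<1}. cmod (h y1 y2) \<le> M"
      unfolding h_def using dens.hker_bound[OF D] by blast
  next
    fix y2 :: real
    show "set_integrable lborel {0..<1} (\<lambda>y1. h y1 y2 * complex_of_real (g y1))"
      unfolding h_def by (rule dens.mean_zero(1)[OF D])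
    show "(LINT y1:{0..<1}|lborel. h y1 y2 * complex_of_real (g y1)) = 0"
      unfolding h_def by (rule dens.mean_zero(2)[OF D])
  next
    fix y2 :: real
    have "(LINT y1:{0..<1}|lborel. (Re (h y1 y2))\<^sup>2 * g y1) \<le> 4 * r * X"
      unfolding h_def r_def X_def by (rule dens.B_part[OF D])
    also have "\<dots> \<le> 4 * r * C" using XC r0 by (intro mult_left_mono) auto
    also have "\<dots> = 8 * sqrt L * (r * sqrt r)" unfolding Ceq by (simp add: mult_ac)
    also have "\<dots> \<le> 9 * L * (r * sqrt r)"
    proof (rule mult_right_mono)
      have s1: "1 \<le> sqrt L" using L1 by simp
      then have "sqrt L * 1 \<le> sqrt L * sqrt L" by (intro mult_left_mono) auto
      then have "sqrt L \<le> L" using L1 by simp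
      then show "8 * sqrt L \<le> 9 * L" using L1 by linarith
    qed (use r0 in simp)
    finally show "(LINT y1:{0..<1}|lborel. (Re (h y1 y2))\<^sup>2 * g y1) \<le> B\<^sup>2" unfolding B2 .
  next
    show "(LINT z:{0..<1}\<times>{0..<1}|(lborel \<Otimes>\<^sub>M lborel).
          (Re (h (fst z) (snd z)))\<^sup>2 * g (fst z) * g (snd z)) \<le> C\<^sup>2"
      unfolding h_def dens.C_part[OF D] C2 using G2 .
  next
    fix \<zeta> \<xi> :: "real \<Rightarrow> real"
    assume zm: "\<zeta> \<in> borel_measurable borel" and xm: "\<xi> \<in> borel_measurable borel"
      and zn: "(\<integral>\<^sup>+ x. ennreal ((\<zeta> x)\<^sup>2 * g x) * indicator {0..<1} x \<partial>lborel) \<le> 1"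
      and xn: "(\<integral>\<^sup>+ x. ennreal ((\<xi> x)\<^sup>2 * g x) * indicator {0..<1} x \<partial>lborel) \<le> 1"
    have "(LINT z:{0..<1}\<times>{0..<1}|(lborel \<Otimes>\<^sub>M lborel).
               Re (h (fst z) (snd z)) * \<zeta> (fst z) * \<xi> (snd z) * g (fst z) * g (snd z)) \<le> X"
      unfolding X_def by (rule Dgen[OF zm xm zn xn X0[unfolded X_def] dens.SS_bound_C[OF D zm zn] dens.SS_bound_C[OF D xm xn]])
    then show "(LINT z:{0..<1}\<times>{0..<1}|(lborel \<Otimes>\<^sub>M lborel).
               Re (h (fst z) (snd z)) * \<zeta> (fst z) * \<xi> (snd z) * g (fst z) * g (snd z)) \<le> C"
      using XC by linarith
  next
    fix \<zeta> \<xi> :: "real \<Rightarrow> real"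
    assume sm: "(\<lambda>j. cmod (fcoef g j)) summable_on (UNIV::int set)"
      and zm: "\<zeta> \<in> borel_measurable borel" and xm: "\<xi> \<in> borel_measurable borel"
      and zn: "(\<integral>\<^sup>+ x. ennreal ((\<zeta> x)\<^sup>2 * g x) * indicator {0..<1} x \<partial>lborel) \<le> 1"
      and xn: "(\<integral>\<^sup>+ x. ennreal ((\<xi> x)\<^sup>2 * g x) * indicator {0..<1} x \<partial>lborel) \<le> 1"
    have l0: "0 \<le> l1norm_fc g" unfolding l1norm_fc_def by (rule infsum_nonneg) auto
    have "(LINT z:{0..<1}\<times>{0..<1}|(lborel \<Otimes>\<^sub>M lborel).
               Re (h (fst z) (snd z)) * \<zeta> (fst z) * \<xi> (snd z) * g (fst z) * g (snd z)) \<le> 2 * l1norm_fc g"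
      using l0 by (intro Dgen[OF zm xm zn xn] dens.SS_bound_l1[OF D] sm zm xm zn xn) auto
    then show "(LINT z:{0..<1}\<times>{0..<1}|(lborel \<Otimes>\<^sub>M lborel).
               Re (h (fst z) (snd z)) * \<zeta> (fst z) * \<xi> (snd z) * g (fst z) * g (snd z)) \<le> 4 * l1norm_fc g"
      using l0 by linarith
  qed
qed


end
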